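(* Let $f:\{0,1\}^n\to\{0,1\}$ be a Boolean function and $c\in\mathbb{R}^n_{\ge0}$ a cost vector. For every $\varepsilon\in(0,0.5]$ and $\beta>0$, there exists an $\varepsilon$-error online algorithm with unit investment $\beta$ (namely the algorithm Warmup-IPRR$(f,\varepsilon)$ described in the context) whose expected cost satisfies \[ \mathrm{avg\text{-}cost}_c \le \beta n + \frac{\mathrm{opt}^{\mathrm{w}}_0(f,c)}{\varepsilon}\sum_{i=1}^n \mathrm{Inf}_i[f]\left(1+\ln\frac{1}{\mathrm{Inf}_i[f]}\right). \]
   Context: Online priced query model: $f:\{0,1\}^n\to\{0,1\}$ is given; the input $x\in\{0,1\}^n$ and costs $c\in\mathbb{R}^n_{\ge0}$ are unknown. The algorithm maintains investments $\theta\in\mathbb{R}^n_{\ge0}$, initially $0$; each step it increases one $\theta_i$ by $\beta$; $x_i$ is revealed once $\theta_i\ge c_i$. The cost on input $x$ is $\|\theta\|_1$ at halting. Offline algorithms know $c$ and pay $c_i$ to reveal $x_i$. An algorithm is $\varepsilon$-error if $\Pr_{x}[\text{output}\ne f(x)]\le\varepsilon$ for uniform $x$. $\mathrm{avg\text{-}cost}_c$ is the expected cost over uniform $x$; $\mathrm{worst\text{-}cost}_c$ is the max over $x$. $\mathrm{opt}^{\mathrm{w}}_0(f,c)$ is the infimum of worst-case cost over all zero-error algorithms (offline or online). $\mathrm{Inf}_i[f]=\Pr_x[f(x)\ne f(x^{\oplus i})]$ ($x^{\oplus i}$: $x$ with bit $i$ flipped); terms with $\mathrm{Inf}_i[f]=0$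 contribute $0$. For a restriction $\pi$ (partial assignment of variables), $f_\pi$ is the restricted function, and $\mathrm{bias}(g)=\min\{\Pr_x[g(x)\ne0],\Pr_x[g(x)\ne1]\}$. Warmup-IPRR$(f,\varepsilon)$: start with $\theta=0$, $\pi=\emptyset$; while $\mathrm{bias}(f_\pi)>\varepsilon$: pick $i^*\in\arg\max_i \mathrm{Inf}_i[f_\pi]/\theta_i$, increase $\theta_{i^*}$ by $\beta$, and if $x_{i^*}$ is revealed as $b$, add $x_{i^*}\mapsto b$ to $\pi$; finally output $\mathbf{1}\{\mathbb{E}_x[f_\pi(x)]\ge 1/2\}$. *)

theory Defs
  imports Complex_Main "HOL-Library.FuncSet" "HOL-Library.Extended_Real"
begin

text \<open>Boolean cube {0,1}^n: extensional functions on {0..<n} with values in bool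
  (False = 0, True = 1). Probabilities are with respect to the uniform distribution.\<close>

definition cube :: "nat \<Rightarrow> (nat \<Rightarrow> bool) set" where
  "cube n = PiE {..<n} (\<lambda>_. UNIV)"

definition prob :: "nat \<Rightarrow> ((nat \<Rightarrow> bool) \<Rightarrow> bool) \<Rightarrow> real" where
  "prob n P = real (card {x \<in> cube n. P x}) / 2 ^ n"

definition flip :: "(nat \<Rightarrow> bool) \<Rightarrow> nat \<Rightarrow> (nat \<Rightarrow> bool)" where
  "flip x i = x(i := \<not> x i)"

definition infl :: "nat \<Rightarrow> ((nat \<Rightarrow> bool) \<Rightarrow> bool) \<Rightarrow> nat \<Rightarrow> real" where
  "infl n g i = prob n (\<lambda>x. g x \<noteq> g (flip x i))"

definition bias :: "nat \<Rightarrow> ((nat \<Rightarrow> bool) \<Rightarrow> bool) \<Rightarrow> real" where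
  "bias n g = min (prob n (\<lambda>x. g x \<noteq> False)) (prob n (\<lambda>x. g x \<noteq> True))"

text \<open>Restriction f_\<pi> by a partial assignment \<pi> (viewed as a function of all n variables,
  ignoring the fixed ones).\<close>
definition restr :: "((nat \<Rightarrow> bool) \<Rightarrow> bool) \<Rightarrow> (nat \<Rightarrow> bool option) \<Rightarrow> (nat \<Rightarrow> bool) \<Rightarrow> bool" where
  "restr f \<pi> = (\<lambda>x. f (\<lambda>i. case \<pi> i of Some b \<Rightarrow> b | None \<Rightarrow> x i))"

text \<open>The ratio Inf_i/\<theta>_i, with the convention a/0 = \<infinity> for a > 0 and 0/0 = 0.\<close>
definition ratio :: "real \<Rightarrow> real \<Rightarrow> ereal" where
  "ratio a t = (if t = 0 then (if a > 0 then \<infinity> else 0) else ereal (a / t))"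

text \<open>States of Warmup-IPRR: investments \<theta> and partial assignment \<pi>.
  A tie-breaking rule sel picks the index to invest in, given the current state.\<close>
type_synonym state = "(nat \<Rightarrow> real) \<times> (nat \<Rightarrow> bool option)"

definition is_iprr_rule ::
  "nat \<Rightarrow> ((nat \<Rightarrow> bool) \<Rightarrow> bool) \<Rightarrow> real \<Rightarrow> (state \<Rightarrow> nat) \<Rightarrow> bool" where
  "is_iprr_rule n f \<epsilon> sel \<longleftrightarrow>
     (\<forall>\<theta> \<pi>. bias n (restr f \<pi>) > \<epsilon> \<longrightarrow>
        sel (\<theta>, \<pi>) < n \<and>
        (\<forall>j<n. ratio (infl n (restr f \<pi>) j) (\<theta> j)
               \<le> ratio (infl n (restr f \<pi>) (sel (\<theta>, \<pi>))) (\<theta> (sel (\<theta>, \<pi>)))))"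

definition iprr_step ::
  "(nat \<Rightarrow> real) \<Rightarrow> real \<Rightarrow> (state \<Rightarrow> nat) \<Rightarrow> (nat \<Rightarrow> bool) \<Rightarrow> state \<Rightarrow> state" where
  "iprr_step c \<beta> sel x s =
     (let i = sel s; \<theta>' = (fst s)(i := fst s i + \<beta>)
      in (\<theta>', if \<theta>' i \<ge> c i then (snd s)(i \<mapsto> x i) else snd s))"

definition iprr_run ::
  "(nat \<Rightarrow> real) \<Rightarrow> real \<Rightarrow> (state \<Rightarrow> nat) \<Rightarrow> (nat \<Rightarrow> bool) \<Rightarrow> nat \<Rightarrow> state" where
  "iprr_run c \<beta> sel x k = (iprr_step c \<beta> sel x ^^ k) (\<lambda>_. 0, Map.empty)"

definition iprr_halts_at ::
  "nat \<Rightarrow> ((nat \<Rightarrow> bool) \<Rightarrow> bool) \<Rightarrow> (nat \<Rightarrow> real) \<Rightarrow> real \<Rightarrow> real \<Rightarrow> (state \<Rightarrow> nat)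
     \<Rightarrow> (nat \<Rightarrow> bool) \<Rightarrow> nat \<Rightarrow> bool" where
  "iprr_halts_at n f c \<epsilon> \<beta> sel x k \<longleftrightarrow>
     bias n (restr f (snd (iprr_run c \<beta> sel x k))) \<le> \<epsilon>"

definition iprr_time ::
  "nat \<Rightarrow> ((nat \<Rightarrow> bool) \<Rightarrow> bool) \<Rightarrow> (nat \<Rightarrow> real) \<Rightarrow> real \<Rightarrow> real \<Rightarrow> (state \<Rightarrow> nat)
     \<Rightarrow> (nat \<Rightarrow> bool) \<Rightarrow> nat" where
  "iprr_time n f c \<epsilon> \<beta> sel x = (LEAST k. iprr_halts_at n f c \<epsilon> \<beta> sel x k)"

definition iprr_final ::
  "nat \<Rightarrow> ((nat \<Rightarrow> bool) \<Rightarrow> bool) \<Rightarrow> (nat \<Rightarrow> real) \<Rightarrow> real \<Rightarrow> real \<Rightarrow> (state \<Rightarrow> nat)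
     \<Rightarrow> (nat \<Rightarrow> bool) \<Rightarrow> state" where
  "iprr_final n f c \<epsilon> \<beta> sel x = iprr_run c \<beta> sel x (iprr_time n f c \<epsilon> \<beta> sel x)"

definition iprr_output ::
  "nat \<Rightarrow> ((nat \<Rightarrow> bool) \<Rightarrow> bool) \<Rightarrow> (nat \<Rightarrow> real) \<Rightarrow> real \<Rightarrow> real \<Rightarrow> (state \<Rightarrow> nat)
     \<Rightarrow> (nat \<Rightarrow> bool) \<Rightarrow> bool" where
  "iprr_output n f c \<epsilon> \<beta> sel x =
     (prob n (restr f (snd (iprr_final n f c \<epsilon> \<beta> sel x))) \<ge> 1/2)"

definition iprr_cost ::
  "nat \<Rightarrow> ((nat \<Rightarrow> bool) \<Rightarrow> bool) \<Rightarrow> (nat \<Rightarrow> real) \<Rightarrow> real \<Rightarrow> real \<Rightarrow> (state \<Rightarrow> nat)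
     \<Rightarrow> (nat \<Rightarrow> bool) \<Rightarrow> real" where
  "iprr_cost n f c \<epsilon> \<beta> sel x = (\<Sum>i<n. fst (iprr_final n f c \<epsilon> \<beta> sel x) i)"

definition iprr_avg_cost ::
  "nat \<Rightarrow> ((nat \<Rightarrow> bool) \<Rightarrow> bool) \<Rightarrow> (nat \<Rightarrow> real) \<Rightarrow> real \<Rightarrow> real \<Rightarrow> (state \<Rightarrow> nat) \<Rightarrow> real" where
  "iprr_avg_cost n f c \<epsilon> \<beta> sel =
     (\<Sum>x\<in>cube n. iprr_cost n f c \<epsilon> \<beta> sel x) / 2 ^ n"

text \<open>Offline algorithms = adaptive query strategies = decision trees. Querying x_i costs c_i.\<close>
datatype dtree = Leaf bool | Query nat dtree dtree  (* Query i t0 t1: t0 if x_i = 0, t1 if x_i = 1 *)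

fun dt_eval :: "dtree \<Rightarrow> (nat \<Rightarrow> bool) \<Rightarrow> bool" where
  "dt_eval (Leaf b) x = b"
| "dt_eval (Query i t0 t1) x = (if x i then dt_eval t1 x else dt_eval t0 x)"

fun dt_cost :: "(nat \<Rightarrow> real) \<Rightarrow> dtree \<Rightarrow> (nat \<Rightarrow> bool) \<Rightarrow> real" where
  "dt_cost c (Leaf b) x = 0"
| "dt_cost c (Query i t0 t1) x = c i + (if x i then dt_cost c t1 x else dt_cost c t0 x)"

fun dt_vars :: "dtree \<Rightarrow> nat set" where
  "dt_vars (Leaf b) = {}"
| "dt_vars (Query i t0 t1) = insert i (dt_vars t0 \<union> dt_vars t1)"

definition dt_worst_cost :: "nat \<Rightarrow> (nat \<Rightarrow> real) \<Rightarrow> dtree \<Rightarrow> real" where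
  "dt_worst_cost n c t = Max ((\<lambda>x. dt_cost c t x) ` cube n)"

definition opt_w0 :: "nat \<Rightarrow> ((nat \<Rightarrow> bool) \<Rightarrow> bool) \<Rightarrow> (nat \<Rightarrow> real) \<Rightarrow> real" where
  "opt_w0 n f c = Inf {dt_worst_cost n c t | t.
      dt_vars t \<subseteq> {..<n} \<and> (\<forall>x\<in>cube n. dt_eval t x = f x)}"

end

theory Submission
  imports Defs
begin

definition rc :: "(nat \<Rightarrow> bool option) \<Rightarrow> (nat \<Rightarrow> bool) \<Rightarrow> (nat \<Rightarrow> bool)" where
  "rc \<pi> u = (\<lambda>i. case \<pi> i of Some b \<Rightarrow> b | None \<Rightarrow> u i)"

definition ind :: "bool \<Rightarrow> real" where "ind P = (if P then 1 else 0)"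

lemma restr_rc: "restr f \<pi> x = f (rc \<pi> x)"
  by (simp add: restr_def rc_def)

lemma cube_finite[simp]: "finite (cube n)"
  by (simp add: cube_def finite_PiE)

lemma card_cube: "card (cube n) = 2 ^ n"
  by (simp add: cube_def card_PiE)

lemma cube_ne: "cube n \<noteq> {}"
  by (simp add: cube_def PiE_eq_empty_iff)

lemma flip_cube: "i < n \<Longrightarrow> u \<in> cube n \<Longrightarrow> flip u i \<in> cube n"
  by (auto simp: cube_def flip_def PiE_iff extensional_def)

lemma upd_cube: "i < n \<Longrightarrow> u \<in> cube n \<Longrightarrow> u(i := b) \<in> cube n"
  by (auto simp: cube_def PiE_iff extensional_def)

lemma flip_flip[simp]: "flip (flip u i) i = u"
  by (simp add: flip_def)

lemma flip_at[simp]: "flip u i i = (\<not> u i)"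
  by (simp add: flip_def)

lemma flip_other: "j \<noteq> i \<Longrightarrow> flip u i j = u j"
  by (simp add: flip_def)

lemma rc_cube: "(\<forall>j\<ge>n. \<pi> j = None) \<Longrightarrow> u \<in> cube n \<Longrightarrow> rc \<pi> u \<in> cube n"
  by (auto simp: cube_def PiE_iff extensional_def rc_def split: option.splits)

lemma rc_empty[simp]: "rc Map.empty u = u"
  by (simp add: rc_def)

lemma prob_sum: "prob n P * 2 ^ n = (\<Sum>u\<in>cube n. ind (P u))"
proof -
  have "real (card {x \<in> cube n. P x}) = (\<Sum>u\<in>{x \<in> cube n. P x}. 1)"
    by (rule real_of_card)
  also have "\<dots> = (\<Sum>u\<in>cube n. if P u then 1 else 0)"
    by (rule sum.inter_filter) simp
  also have "\<dots> = (\<Sum>u\<in>cube n. ind (P u))"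
    by (simp add: ind_def)
  finally show ?thesis by (simp add: prob_def)
qed

lemma prob_nonneg: "prob n P \<ge> 0"
  by (simp add: prob_def)

lemma prob_le1: "prob n P \<le> 1"
proof -
  have "card {x \<in> cube n. P x} \<le> card (cube n)"
    by (rule card_mono) auto
  then show ?thesis by (simp add: prob_def card_cube)
qed

lemma prob_not: "prob n (\<lambda>x. \<not> P x) = 1 - prob n P"
proof -
  have "(\<Sum>u\<in>cube n. ind (\<not> P u)) = (\<Sum>u\<in>cube n. 1 - ind (P u))"
    by (rule sum.cong) (auto simp: ind_def)
  also have "\<dots> = 2 ^ n - (\<Sum>u\<in>cube n. ind (P u))"
    by (simp add: sum_subtractf card_cube)
  finally have "prob n (\<lambda>x. \<not> P x) * 2 ^ n = 2 ^ n - prob n P * 2 ^ n"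
    by (simp add: prob_sum)
  then have "(prob n (\<lambda>x. \<not> P x) + prob n P) * 2 ^ n = 1 * 2 ^ n"
    by (simp add: algebra_simps)
  then have "prob n (\<lambda>x. \<not> P x) + prob n P = 1"
    by (simp only: mult_cancel_right) simp
  then show ?thesis by simp
qed

lemma sum_flip_half:
  assumes "i < n"
  shows "(\<Sum>u\<in>{u\<in>cube n. u i \<noteq> b}. F u) = (\<Sum>u\<in>{u\<in>cube n. u i = b}. F (flip u i))"
  by (rule sum.reindex_bij_witness[where i="\<lambda>u. flip u i" and j="\<lambda>u. flip u i"])
     (auto simp: flip_cube assms)

lemma sum_split:
  "(\<Sum>u\<in>cube n. F u) = (\<Sum>u\<in>{u\<in>cube n. u i = b}. F u) + (\<Sum>u\<in>{u\<in>cube n. u i \<noteq> b}. F u)"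
proof -
  have eq: "{u\<in>cube n. u i = b} \<union> {u\<in>cube n. u i \<noteq> b} = cube n" by auto
  have "sum F ({u\<in>cube n. u i = b} \<union> {u\<in>cube n. u i \<noteq> b}) =
     sum F {u\<in>cube n. u i = b} + sum F {u\<in>cube n. u i \<noteq> b}"
    by (rule sum.union_disjoint) auto
  then show ?thesis unfolding eq .
qed

lemma sum_half_indep:
  fixes F :: "(nat \<Rightarrow> bool) \<Rightarrow> real"
  assumes "i < n" and "\<And>u. u \<in> cube n \<Longrightarrow> F (flip u i) = F u"
  shows "(\<Sum>u\<in>cube n. F u) = 2 * (\<Sum>u\<in>{u\<in>cube n. u i = b}. F u)"
proof -
  have "(\<Sum>u\<in>{u\<in>cube n. u i \<noteq> b}. F u) = (\<Sum>u\<in>{u\<in>cube n. u i = b}. F (flip u i))"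
    by (rule sum_flip_half[OF assms(1)])
  also have "\<dots> = (\<Sum>u\<in>{u\<in>cube n. u i = b}. F u)"
    by (rule sum.cong) (auto simp: assms(2))
  finally have e: "(\<Sum>u\<in>{u\<in>cube n. u i \<noteq> b}. F u) = (\<Sum>u\<in>{u\<in>cube n. u i = b}. F u)" .
  show ?thesis using sum_split[of F n i b] unfolding e by linarith
qed

lemma flip_rc: "\<pi> i \<noteq> None \<Longrightarrow> rc \<pi> (flip u i) = rc \<pi> u"
  by (auto simp: rc_def flip_def fun_eq_iff split: option.splits)

lemma rc_flip_free: "\<pi> j = None \<Longrightarrow> rc \<pi> (flip u j) = flip (rc \<pi> u) j"
  by (auto simp: rc_def flip_def fun_eq_iff split: option.splits)

lemma rc_upd: "u i = b \<Longrightarrow> rc (\<pi>(i \<mapsto> b)) u = rc \<pi> u \<or> \<pi> i \<noteq> None"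
  by (auto simp: rc_def fun_eq_iff split: option.splits)

lemma rc_upd': "\<pi> i = None \<Longrightarrow> u i = b \<Longrightarrow> rc (\<pi>(i \<mapsto> b)) u = rc \<pi> u"
  by (auto simp: rc_def fun_eq_iff split: option.splits)

lemma rc_upd_eq: "rc (\<pi>(i \<mapsto> b)) u = rc \<pi> (u(i := b)) \<or> \<pi> i \<noteq> None"
  by (auto simp: rc_def fun_eq_iff split: option.splits)

lemma rc_upd_eq': "\<pi> i = None \<Longrightarrow> rc (\<pi>(i \<mapsto> b)) u = rc \<pi> (u(i := b))"
  by (auto simp: rc_def fun_eq_iff split: option.splits)

lemma split_avg:
  fixes H :: "(nat \<Rightarrow> bool) \<Rightarrow> real"
  assumes "i < n" "\<pi> i = None"
  shows "(\<Sum>u\<in>cube n. H (rc \<pi> u)) =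
    ((\<Sum>u\<in>cube n. H (rc (\<pi>(i \<mapsto> True)) u)) + (\<Sum>u\<in>cube n. H (rc (\<pi>(i \<mapsto> False)) u))) / 2"
proof -
  have h: "(\<Sum>u\<in>cube n. H (rc (\<pi>(i \<mapsto> b)) u)) = 2 * (\<Sum>u\<in>{u\<in>cube n. u i = b}. H (rc \<pi> u))" for b
  proof -
    have "(\<Sum>u\<in>cube n. H (rc (\<pi>(i \<mapsto> b)) u)) = 2 * (\<Sum>u\<in>{u\<in>cube n. u i = b}. H (rc (\<pi>(i \<mapsto> b)) u))"
      by (rule sum_half_indep[OF assms(1)]) (simp add: flip_rc)
    also have "(\<Sum>u\<in>{u\<in>cube n. u i = b}. H (rc (\<pi>(i \<mapsto> b)) u)) = (\<Sum>u\<in>{u\<in>cube n. u i = b}. H (rc \<pi> u))"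
      by (rule sum.cong) (auto simp: assms(2) rc_upd')
    finally show ?thesis .
  qed
  have "{u\<in>cube n. u i \<noteq> True} = {u\<in>cube n. u i = False}" by auto
  then have "(\<Sum>u\<in>cube n. H (rc \<pi> u)) = (\<Sum>u\<in>{u\<in>cube n. u i = True}. H (rc \<pi> u)) + (\<Sum>u\<in>{u\<in>cube n. u i = False}. H (rc \<pi> u))"
    using sum_split[of "\<lambda>u. H (rc \<pi> u)" n i True] by simp
  then show ?thesis unfolding h[of True] h[of False] by simp
qed


lemma ind_nonneg: "ind P \<ge> 0" by (simp add: ind_def)

lemma infl_nonneg: "infl n g j \<ge> 0"
  by (simp add: infl_def prob_nonneg)

lemma infl_le1: "infl n g j \<le> 1"
  by (simp add: infl_def prob_le1)

lemma prob_zero_iff: "prob n P = 0 \<longleftrightarrow> (\<forall>x\<in>cube n. \<not> P x)"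
proof -
  have "prob n P = 0 \<longleftrightarrow> card {x \<in> cube n. P x} = 0" by (simp add: prob_def)
  also have "\<dots> \<longleftrightarrow> {x \<in> cube n. P x} = {}" by simp
  finally show ?thesis by auto
qed

lemma infl_zero_iff: "infl n g j = 0 \<longleftrightarrow> (\<forall>x\<in>cube n. g x = g (flip x j))"
  by (simp add: infl_def prob_zero_iff)

lemma infl_revealed: "\<pi> j \<noteq> None \<Longrightarrow> infl n (restr f \<pi>) j = 0"
  by (simp add: infl_zero_iff restr_rc flip_rc)

lemma const_of_no_infl:
  assumes "\<forall>j<n. \<forall>x\<in>cube n. g x = g (flip x j)"
  shows "\<forall>x\<in>cube n. \<forall>y\<in>cube n. card {j. j < n \<and> x j \<noteq> y j} = k \<longrightarrow> g x = g y"
proof (induction k)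
  case 0
  show ?case
  proof (intro ballI impI)
    fix x y assume xy: "x \<in> cube n" "y \<in> cube n" "card {j. j < n \<and> x j \<noteq> y j} = 0"
    then have "{j. j < n \<and> x j \<noteq> y j} = {}" by simp
    then have "x = y" using xy(1,2) by (auto simp: cube_def PiE_iff extensional_def fun_eq_iff)
    then show "g x = g y" by simp
  qed
next
  case (Suc k)
  show ?case
  proof (intro ballI impI)
    fix x y assume xy: "x \<in> cube n" "y \<in> cube n" "card {j. j < n \<and> x j \<noteq> y j} = Suc k"
    then obtain j where j: "j \<in> {j. j < n \<and> x j \<noteq> y j}"
      by (metis card.empty ex_in_conv nat.simps(3))
    let ?x = "flip x j"
    have "{i. i < n \<and> ?x i \<noteq> y i} = {i. i < n \<and> x i \<noteq> y i} - {j}"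
      using j by (auto simp: flip_def)
    then have "card {i. i < n \<and> ?x i \<noteq> y i} = k" using xy(3) j by simp
    then have "g ?x = g y" using Suc.IH flip_cube[of j n x] j xy by auto
    moreover have "g x = g ?x" using assms j xy by auto
    ultimately show "g x = g y" by simp
  qed
qed

lemma bias_pos_infl:
  assumes "bias n g > 0"
  shows "\<exists>j<n. infl n g j > 0"
proof (rule ccontr)
  assume H: "\<not> ?thesis"
  have "infl n g j = 0" if "j < n" for j
  proof -
    have "\<not> infl n g j > 0" using H that by blast
    then show ?thesis using infl_nonneg[of n g j] by linarith
  qed
  then have "\<forall>j<n. infl n g j = 0" by blast
  then have nf: "\<forall>j<n. \<forall>x\<in>cube n. g x = g (flip x j)" by (simp add: infl_zero_iff)
  have c: "\<forall>x\<in>cube n. \<forall>y\<in>cube n. g x = g y"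
    using const_of_no_infl[OF nf] by blast
  obtain x0 where x0: "x0 \<in> cube n" using cube_ne by blast
  show False
  proof (cases "g x0")
    case True
    then have "\<forall>x\<in>cube n. g x" using c x0 by metis
    then have "prob n (\<lambda>x. g x \<noteq> True) = 0" by (simp add: prob_zero_iff)
    then have "bias n g \<le> 0" by (simp add: bias_def)
    then show False using assms by simp
  next
    case False
    then have "\<forall>x\<in>cube n. \<not> g x" using c x0 by metis
    then have "prob n (\<lambda>x. g x \<noteq> False) = 0" by (simp add: prob_zero_iff)
    then have "bias n g \<le> 0" by (simp add: bias_def)
    then show False using assms by simp
  qed
qed

lemma infl_rc_sum:
  assumes "\<pi> j = None"
  shows "infl n (restr f \<pi>) j * 2 ^ n = (\<Sum>u\<in>cube n. ind (f (rc \<pi> u) \<noteq> f (flip (rc \<pi> u) j)))"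
  by (simp add: infl_def prob_sum restr_rc rc_flip_free[where \<pi>=\<pi> and j=j, OF assms])

lemma infl_super:
  assumes "i < n" "\<pi> i = None"
  shows "infl n (restr f (\<pi>(i \<mapsto> True))) j + infl n (restr f (\<pi>(i \<mapsto> False))) j
     \<le> 2 * infl n (restr f \<pi>) j"
proof (cases "j = i \<or> \<pi> j \<noteq> None")
  case True
  then have "infl n (restr f (\<pi>(i \<mapsto> True))) j = 0" "infl n (restr f (\<pi>(i \<mapsto> False))) j = 0"
    using True by (auto intro!: infl_revealed)
  then show ?thesis using infl_nonneg[of n "restr f \<pi>" j] by simp
next
  case False
  then have nj: "\<pi> j = None" "(\<pi>(i \<mapsto> b)) j = None" for b by auto
  let ?H = "\<lambda>x. ind (f x \<noteq> f (flip x j))"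
  have "infl n (restr f \<pi>) j * 2 ^ n = (\<Sum>u\<in>cube n. ?H (rc \<pi> u))"
    by (rule infl_rc_sum[where \<pi>=\<pi> and j=j, OF nj(1)])
  also have "\<dots> = ((\<Sum>u\<in>cube n. ?H (rc (\<pi>(i \<mapsto> True)) u)) + (\<Sum>u\<in>cube n. ?H (rc (\<pi>(i \<mapsto> False)) u))) / 2"
    using assms by (rule split_avg)
  also have "\<dots> = (infl n (restr f (\<pi>(i \<mapsto> True))) j * 2 ^ n + infl n (restr f (\<pi>(i \<mapsto> False))) j * 2 ^ n) / 2"
    by (simp add: infl_rc_sum[where \<pi>="\<pi>(i \<mapsto> True)" and j=j, OF nj(2)] infl_rc_sum[where \<pi>="\<pi>(i \<mapsto> False)" and j=j, OF nj(2)])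
  finally have "(infl n (restr f (\<pi>(i \<mapsto> True))) j + infl n (restr f (\<pi>(i \<mapsto> False))) j) * 2 ^ n
     = (2 * infl n (restr f \<pi>) j) * 2 ^ n" by (simp add: algebra_simps)
  then show ?thesis by (simp only: mult_cancel_right) simp
qed


lemma sum_split_tf:
  "(\<Sum>u\<in>cube n. F u) = (\<Sum>u\<in>{u\<in>cube n. u i = True}. F u) + (\<Sum>u\<in>{u\<in>cube n. u i = False}. F u)"
proof -
  have "{u\<in>cube n. u i \<noteq> True} = {u\<in>cube n. u i = False}" by auto
  then show ?thesis using sum_split[of F n i True] by simp
qed

lemma osss:
  assumes "dt_vars T \<subseteq> {..<n}" "\<forall>j\<ge>n. \<rho> j = None"
  shows "bias n g * 2 ^ n \<le> (\<Sum>u\<in>cube n. ind (g u \<noteq> dt_eval T (rc \<rho> u)))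
            + (\<Sum>u\<in>cube n. dt_cost (infl n g) T (rc \<rho> u))"
  using assms
proof (induction T arbitrary: \<rho>)
  case (Leaf b)
  have "bias n g \<le> prob n (\<lambda>u. g u \<noteq> b)" by (cases b) (simp_all add: bias_def)
  then have "bias n g * 2 ^ n \<le> prob n (\<lambda>u. g u \<noteq> b) * 2 ^ n" by simp
  then show ?case by (simp add: prob_sum)
next
  case (Query i T0 T1)
  let ?a = "infl n g"
  have i: "i < n" and v0: "dt_vars T0 \<subseteq> {..<n}" and v1: "dt_vars T1 \<subseteq> {..<n}"
    using Query.prems by auto
  have IHb: "bias n g * 2 ^ n \<le> (\<Sum>u\<in>cube n. ind (g u \<noteq> dt_eval (if b then T1 else T0) (rc \<rho>' u)))
            + (\<Sum>u\<in>cube n. dt_cost ?a (if b then T1 else T0) (rc \<rho>' u))"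
    if "\<forall>j\<ge>n. \<rho>' j = None" for b \<rho>'
    using Query.IH(1)[OF v0 that] Query.IH(2)[OF v1 that] by (cases b) simp_all
  show ?case
  proof (cases "\<rho> i")
    case (Some b)
    let ?Tb = "if b then T1 else T0"
    have rb: "rc \<rho> u i = b" for u using Some by (simp add: rc_def)
    have e: "dt_eval (Query i T0 T1) (rc \<rho> u) = dt_eval ?Tb (rc \<rho> u)" for u
      using rb[of u] by simp
    have c: "dt_cost ?a ?Tb (rc \<rho> u) \<le> dt_cost ?a (Query i T0 T1) (rc \<rho> u)" for u
      using rb[of u] infl_nonneg[of n g i] by simp
    have "bias n g * 2 ^ n \<le> (\<Sum>u\<in>cube n. ind (g u \<noteq> dt_eval ?Tb (rc \<rho> u)))
            + (\<Sum>u\<in>cube n. dt_cost ?a ?Tb (rc \<rho> u))"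
      using IHb Query.prems(2) by blast
    also have "\<dots> \<le> (\<Sum>u\<in>cube n. ind (g u \<noteq> dt_eval (Query i T0 T1) (rc \<rho> u)))
            + (\<Sum>u\<in>cube n. dt_cost ?a (Query i T0 T1) (rc \<rho> u))"
      by (intro add_mono sum_mono) (simp_all only: e c order_refl)
    finally show ?thesis .
  next
    case None
    define \<rho>b where "\<rho>b b = \<rho>(i \<mapsto> b)" for b
    define E where "E b u = dt_eval (if b then T1 else T0) (rc (\<rho>b b) u)" for b u
    define C where "C b u = dt_cost ?a (if b then T1 else T0) (rc (\<rho>b b) u)" for b u
    have \<rho>b_n: "\<forall>j\<ge>n. \<rho>b b j = None" for b using Query.prems(2) i by (auto simp: \<rho>b_def)
    have IHb': "bias n g * 2 ^ n \<le> (\<Sum>u\<in>cube n. ind (g u \<noteq> E b u)) + (\<Sum>u\<in>cube n. C b u)" for b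
      using IHb[OF \<rho>b_n[of b], of b] by (simp add: E_def C_def)
    have Eflip: "E b (flip u i) = E b u" for b u by (simp add: E_def \<rho>b_def flip_rc)
    have Cflip: "C b (flip u i) = C b u" for b u by (simp add: C_def \<rho>b_def flip_rc)
    have rcb: "rc (\<rho>b (u i)) u = rc \<rho> u" for u by (simp add: \<rho>b_def rc_upd' None)
    have rci: "rc \<rho> u i = u i" for u using None by (simp add: rc_def)
    have evalq: "dt_eval (Query i T0 T1) (rc \<rho> u) = E (u i) u" for u
      unfolding E_def rcb using rci[of u] by simp
    have costq: "dt_cost ?a (Query i T0 T1) (rc \<rho> u) = ?a i + C (u i) u" for u
      unfolding C_def rcb using rci[of u] by simp
    have A: "(\<Sum>u\<in>cube n. ind (g u \<noteq> E b u)) \<le> 2 * (\<Sum>u\<in>{u\<in>cube n. u i = b}. ind (g u \<noteq> E b u))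
       + (\<Sum>u\<in>{u\<in>cube n. u i = b}. ind (g u \<noteq> g (flip u i)))" for b
    proof -
      have "(\<Sum>u\<in>{u\<in>cube n. u i \<noteq> b}. ind (g u \<noteq> E b u))
          = (\<Sum>u\<in>{u\<in>cube n. u i = b}. ind (g (flip u i) \<noteq> E b (flip u i)))"
        by (rule sum_flip_half[OF i])
      also have "\<dots> \<le> (\<Sum>u\<in>{u\<in>cube n. u i = b}. ind (g u \<noteq> E b u) + ind (g u \<noteq> g (flip u i)))"
        by (rule sum_mono) (auto simp: Eflip ind_def)
      also have "\<dots> = (\<Sum>u\<in>{u\<in>cube n. u i = b}. ind (g u \<noteq> E b u)) + (\<Sum>u\<in>{u\<in>cube n. u i = b}. ind (g u \<noteq> g (flip u i)))"
        by (rule sum.distrib)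
      finally show ?thesis using sum_split[of "\<lambda>u. ind (g u \<noteq> E b u)" n i b] by linarith
    qed
    have B: "(\<Sum>u\<in>cube n. ind (g u \<noteq> dt_eval (Query i T0 T1) (rc \<rho> u)))
       = (\<Sum>u\<in>{u\<in>cube n. u i = True}. ind (g u \<noteq> E True u)) + (\<Sum>u\<in>{u\<in>cube n. u i = False}. ind (g u \<noteq> E False u))"
      unfolding evalq sum_split_tf[of _ n i]
      by (intro arg_cong2[where f="(+)"] sum.cong) auto
    have C0: "(\<Sum>u\<in>cube n. ind (g u \<noteq> g (flip u i))) = ?a i * 2 ^ n"
      by (simp add: infl_def prob_sum)
    have Cs: "(\<Sum>u\<in>{u\<in>cube n. u i = True}. ind (g u \<noteq> g (flip u i))) + (\<Sum>u\<in>{u\<in>cube n. u i = False}. ind (g u \<noteq> g (flip u i)))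
       = ?a i * 2 ^ n"
      using C0 sum_split_tf[of "\<lambda>u. ind (g u \<noteq> g (flip u i))" n i] by simp
    have D: "(\<Sum>u\<in>cube n. C b u) = 2 * (\<Sum>u\<in>{u\<in>cube n. u i = b}. C b u)" for b
      by (rule sum_half_indep[OF i]) (simp add: Cflip)
    have Eq: "(\<Sum>u\<in>cube n. dt_cost ?a (Query i T0 T1) (rc \<rho> u))
       = ?a i * 2 ^ n + ((\<Sum>u\<in>{u\<in>cube n. u i = True}. C True u) + (\<Sum>u\<in>{u\<in>cube n. u i = False}. C False u))"
    proof -
      have "(\<Sum>u\<in>cube n. dt_cost ?a (Query i T0 T1) (rc \<rho> u)) = (\<Sum>u\<in>cube n. ?a i + C (u i) u)"
        by (intro sum.cong refl) (rule costq)
      also have "\<dots> = ?a i * 2 ^ n + (\<Sum>u\<in>cube n. C (u i) u)"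
        by (simp add: sum.distrib card_cube)
      also have "(\<Sum>u\<in>cube n. C (u i) u) = (\<Sum>u\<in>{u\<in>cube n. u i = True}. C True u) + (\<Sum>u\<in>{u\<in>cube n. u i = False}. C False u)"
        unfolding sum_split_tf[of _ n i]
        by (intro arg_cong2[where f="(+)"] sum.cong) auto
      finally show ?thesis .
    qed
    have an: "?a i * 2 ^ n \<ge> 0" using infl_nonneg[of n g i] by simp
    have X: "bias n g * 2 ^ n \<le> (\<Sum>u\<in>{u\<in>cube n. u i = True}. ind (g u \<noteq> E True u)) + (\<Sum>u\<in>{u\<in>cube n. u i = False}. ind (g u \<noteq> E False u))
       + (?a i * 2 ^ n + ((\<Sum>u\<in>{u\<in>cube n. u i = True}. C True u) + (\<Sum>u\<in>{u\<in>cube n. u i = False}. C False u)))"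
      using IHb'[of True] IHb'[of False] A[of True] A[of False] Cs D[of True] D[of False] an
      by linarith
    show ?thesis
      unfolding B Eq by (rule X)
  qed
qed


lemma dt_cost_scale:
  assumes "\<forall>j\<in>dt_vars T. a j \<le> r * b j"
  shows "dt_cost a T x \<le> r * dt_cost b T x"
  using assms by (induction T) (auto simp: algebra_simps)

lemma step_eq: "iprr_step c \<beta> sel x s =
   ((fst s)(sel s := fst s (sel s) + \<beta>),
    if c (sel s) \<le> fst s (sel s) + \<beta> then (snd s)(sel s \<mapsto> x (sel s)) else snd s)"
  by (simp add: iprr_step_def Let_def)

definition Vf :: "real \<Rightarrow> real \<Rightarrow> real" where
  "Vf x m = (if m = 0 then 0 else m + x * ln (1 / m))"

lemma Vf_ge: "0 \<le> x \<Longrightarrow> 0 \<le> m \<Longrightarrow> m \<le> 1 \<Longrightarrow> m \<le> Vf x m"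
  by (auto simp: Vf_def)

lemma Vf_step:
  assumes "0 \<le> x" "0 < m" "m \<le> 1"
  shows "Vf x (max m x) \<le> m + x * ln (1 / m)"
proof (cases "x \<le> m")
  case True
  then show ?thesis using assms by (simp add: Vf_def max_def)
next
  case False
  then have xm: "x > m" by simp
  then have mx: "max m x = x" by simp
  have "ln (m / x) \<le> m / x - 1" using assms xm by (intro ln_le_minus_one) simp
  then have "x * ln (m / x) \<le> x * (m / x - 1)" using xm assms by (intro mult_left_mono) auto
  also have "\<dots> = m - x" using xm assms by (simp add: field_simps)
  finally have h: "x * ln (m / x) \<le> m - x" .
  have "ln (m / x) = ln (1 / x) - ln (1 / m)" using assms xm by (simp add: ln_div)
  then have e2: "ln (1 / x) = ln (1 / m) + ln (m / x)" by linarith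
  have "x * ln (1 / x) = x * ln (1 / m) + x * ln (m / x)" by (simp add: e2 distrib_left)
  then have "x + x * ln (1 / x) \<le> m + x * ln (1 / m)" using h by linarith
  then show ?thesis using xm assms by (simp add: Vf_def mx)
qed

lemma Vf_super:
  assumes "0 \<le> xT" "0 \<le> xF" "xT + xF \<le> 2 * x" "0 \<le> x" "x \<le> m" "m \<le> 1"
  shows "Vf xT (max m xT) + Vf xF (max m xF) \<le> 2 * Vf x m"
proof (cases "m = 0")
  case True
  then have "xT = 0" "xF = 0" using assms by auto
  then show ?thesis using True by (simp add: Vf_def)
next
  case False
  then have m: "0 < m" using assms by simp
  have l: "ln (1 / m) \<ge> 0" using m assms by simp
  have "Vf xT (max m xT) + Vf xF (max m xF) \<le> (m + xT * ln (1 / m)) + (m + xF * ln (1 / m))"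
    using Vf_step[OF assms(1) m assms(6)] Vf_step[OF assms(2) m assms(6)] by linarith
  also have "\<dots> = 2 * m + (xT + xF) * ln (1 / m)" by (simp add: algebra_simps)
  also have "\<dots> \<le> 2 * m + (2 * x) * ln (1 / m)" using assms(3) l by (intro add_left_mono mult_right_mono) auto
  also have "\<dots> = 2 * Vf x m" using False by (simp add: Vf_def algebra_simps)
  finally show ?thesis .
qed

locale alg =
  fixes n :: nat and f :: "(nat \<Rightarrow> bool) \<Rightarrow> bool" and c :: "nat \<Rightarrow> real"
    and \<epsilon> \<beta> :: real and sel :: "state \<Rightarrow> nat"
  assumes cnn: "\<forall>i<n. c i \<ge> 0"
    and eps: "0 < \<epsilon>" "\<epsilon> \<le> 1/2" and beta: "\<beta> > 0"
    and rule: "is_iprr_rule n f \<epsilon> sel"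
begin

definition halted :: "state \<Rightarrow> bool" where
  "halted s \<longleftrightarrow> bias n (restr f (snd s)) \<le> \<epsilon>"

definition stepH :: "(nat \<Rightarrow> bool) \<Rightarrow> state \<Rightarrow> state" where
  "stepH x s = (if halted s then s else iprr_step c \<beta> sel x s)"

definition Rs :: "(nat \<Rightarrow> bool) \<Rightarrow> state \<Rightarrow> nat \<Rightarrow> state" where
  "Rs x s k = (stepH x ^^ k) s"

definition Inv :: "state \<Rightarrow> bool" where
  "Inv s \<longleftrightarrow> (\<forall>j. 0 \<le> fst s j) \<and> (\<forall>j. snd s j = None \<longrightarrow> fst s j = 0 \<or> fst s j < c j)
     \<and> (\<forall>j\<ge>n. snd s j = None)"

lemma Rs_0[simp]: "Rs x s 0 = s" by (simp add: Rs_def)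

lemma Rs_Suc: "Rs x s (Suc k) = Rs x (stepH x s) k"
  by (simp add: Rs_def funpow_swap1)

lemma Rs_halted: "halted s \<Longrightarrow> Rs x s k = s"
  by (induction k) (simp_all add: Rs_Suc stepH_def)

lemma Inv_s0: "Inv (\<lambda>_. 0, Map.empty)"
  using cnn by (simp add: Inv_def)

lemma step_props:
  assumes "Inv s" "\<not> halted s"
  shows "sel s < n" "snd s (sel s) = None" "infl n (restr f (snd s)) (sel s) > 0"
proof -
  obtain \<theta> \<pi> where s: "s = (\<theta>, \<pi>)" by (cases s)
  let ?g = "restr f \<pi>"
  let ?i = "sel (\<theta>, \<pi>)"
  have b: "bias n ?g > \<epsilon>" using assms(2) s by (simp add: halted_def)
  then have r: "?i < n" "\<forall>j<n. ratio (infl n ?g j) (\<theta> j) \<le> ratio (infl n ?g ?i) (\<theta> ?i)"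
    using rule by (auto simp: is_iprr_rule_def)
  obtain j where j: "j < n" "infl n ?g j > 0" using bias_pos_infl[of n ?g] b eps by auto
  have th: "\<theta> j \<ge> 0" using assms(1) s by (simp add: Inv_def)
  have "ratio (infl n ?g j) (\<theta> j) > 0"
    using j th by (auto simp: ratio_def)
  then have "ratio (infl n ?g ?i) (\<theta> ?i) > 0" using r j by (meson less_le_trans)
  moreover have "ratio 0 t = 0" for t by (simp add: ratio_def)
  ultimately have "infl n ?g ?i \<noteq> 0" by force
  then have pos: "infl n ?g ?i > 0" using infl_nonneg[of n ?g ?i] by linarith
  have "\<pi> ?i = None"
  proof (rule ccontr)
    assume "\<pi> ?i \<noteq> None"
    then have "infl n ?g ?i = 0" by (rule infl_revealed)
    with pos show False by simp
  qed
  then show "sel s < n" "snd s (sel s) = None" "infl n (restr f (snd s)) (sel s) > 0"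
    using r pos s by auto
qed

lemma Inv_step:
  assumes "Inv s" "\<not> halted s"
  shows "Inv (iprr_step c \<beta> sel x s)"
  using assms step_props[OF assms] beta unfolding Inv_def step_eq
  by (auto simp: less_le_not_le)

definition Phi :: "state \<Rightarrow> real" where
  "Phi s = (\<Sum>j<n. if snd s j = None then c j + \<beta> - fst s j else 0)"

lemma Phi_nonneg: "Inv s \<Longrightarrow> Phi s \<ge> 0"
  unfolding Phi_def
proof (intro sum_nonneg)
  fix j assume I: "Inv s" and j: "j \<in> {..<n}"
  have "c j \<ge> 0" using cnn j by simp
  moreover have "snd s j = None \<longrightarrow> fst s j = 0 \<or> fst s j < c j" using I by (simp add: Inv_def)
  ultimately show "0 \<le> (if snd s j = None then c j + \<beta> - fst s j else 0)" using beta by auto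
qed

lemma Phi_step:
  assumes "Inv s" "\<not> halted s"
  shows "Phi (iprr_step c \<beta> sel x s) \<le> Phi s - \<beta>"
proof -
  let ?i = "sel s"
  have i: "?i < n" "snd s ?i = None" using step_props[OF assms] by auto
  have "fst s ?i = 0 \<or> fst s ?i < c ?i" using assms(1) i(2) by (simp add: Inv_def)
  moreover have "c ?i \<ge> 0" using cnn i(1) by simp
  ultimately have ci: "fst s ?i \<le> c ?i" by auto
  let ?F = "\<lambda>j. if snd s j = None then c j + \<beta> - fst s j else 0"
  let ?s' = "iprr_step c \<beta> sel x s"
  let ?G = "\<lambda>j. if snd ?s' j = None then c j + \<beta> - fst ?s' j else 0"
  have le: "?G j \<le> ?F j - (if j = ?i then \<beta> else 0)" for j
    using i ci beta by (auto simp: step_eq)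
  have "Phi ?s' = (\<Sum>j<n. ?G j)" by (simp add: Phi_def)
  also have "\<dots> \<le> (\<Sum>j<n. ?F j - (if j = ?i then \<beta> else 0))" by (rule sum_mono) (rule le)
  also have "\<dots> = Phi s - \<beta>" using i(1) by (simp add: Phi_def sum_subtractf)
  finally show ?thesis .
qed

lemma terminate_aux:
  "\<forall>s. Inv s \<longrightarrow> halted (Rs x s k) \<or> Phi (Rs x s k) \<le> Phi s - real k * \<beta>"
proof (induction k)
  case 0
  then show ?case by simp
next
  case (Suc k)
  show ?case
  proof (intro allI impI)
    fix s assume I: "Inv s"
    show "halted (Rs x s (Suc k)) \<or> Phi (Rs x s (Suc k)) \<le> Phi s - real (Suc k) * \<beta>"
    proof (cases "halted s")
      case True
      then show ?thesis by (simp add: Rs_halted)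
    next
      case False
      have "Inv (stepH x s)" using Inv_step[OF I False] False by (simp add: stepH_def)
      moreover have "Phi (stepH x s) \<le> Phi s - \<beta>" using Phi_step[OF I False] False by (simp add: stepH_def)
      ultimately have IH': "halted (Rs x (stepH x s) k) \<or> Phi (Rs x (stepH x s) k) \<le> Phi (stepH x s) - real k * \<beta>"
        and st: "Phi (stepH x s) \<le> Phi s - \<beta>" using Suc.IH by blast+
      have e: "real (Suc k) * \<beta> = real k * \<beta> + \<beta>" by (simp add: algebra_simps)
      show ?thesis unfolding Rs_Suc using IH' st e by linarith
    qed
  qed
qed

lemma Inv_Rs: "Inv s \<Longrightarrow> Inv (Rs x s k)"
proof (induction k arbitrary: s)
  case 0 then show ?case by simp
next
  case (Suc k)
  have "Inv (stepH x s)" using Suc.prems Inv_step[OF Suc.prems] by (simp add: stepH_def)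
  then show ?case using Suc.IH by (simp add: Rs_Suc)
qed

definition K0 :: nat where "K0 = nat \<lceil>Phi (\<lambda>_. 0, Map.empty) / \<beta>\<rceil> + 1"

lemma terminates: "halted (Rs x (\<lambda>_. 0, Map.empty) K0)"
proof (rule ccontr)
  let ?s0 = "(\<lambda>_. 0, Map.empty) :: state"
  assume H: "\<not> ?thesis"
  then have "Phi (Rs x ?s0 K0) \<le> Phi ?s0 - real K0 * \<beta>" using terminate_aux[of x K0] Inv_s0 by blast
  moreover have "Phi (Rs x ?s0 K0) \<ge> 0" by (rule Phi_nonneg[OF Inv_Rs[OF Inv_s0]])
  moreover have "real K0 * \<beta> > Phi ?s0"
  proof -
    have "real K0 > Phi ?s0 / \<beta>" unfolding K0_def by linarith
    then show ?thesis using beta by (simp add: field_simps)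
  qed
  ultimately show False by linarith
qed

end


definition outp :: "nat \<Rightarrow> ((nat \<Rightarrow> bool) \<Rightarrow> bool) \<Rightarrow> (nat \<Rightarrow> bool option) \<Rightarrow> bool" where
  "outp n f \<pi> = (prob n (restr f \<pi>) \<ge> 1/2)"

context alg
begin

lemma key:
  assumes I: "Inv s" and nh: "\<not> halted s" and pos: "fst s (sel s) > 0"
    and T: "dt_vars T \<subseteq> {..<n}" "\<forall>x\<in>cube n. dt_eval T x = f x"
  shows "fst s (sel s) * \<epsilon> < infl n (restr f (snd s)) (sel s) * dt_worst_cost n c T"
proof -
  obtain \<theta> \<pi> where s: "s = (\<theta>, \<pi>)" by (cases s)
  define g where "g = restr f \<pi>"
  define i where "i = sel s"
  define X where "X = infl n g"
  define r where "r = X i / \<theta> i"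
  define W where "W = dt_worst_cost n c T"
  have thi: "\<theta> i > 0" using pos s i_def by simp
  have Xi: "X i \<ge> 0" by (simp add: X_def infl_nonneg)
  have r0: "r \<ge> 0" using thi Xi by (simp add: r_def)
  have bg: "bias n g > \<epsilon>" using nh s by (simp add: halted_def g_def)
  have rat: "\<forall>j<n. ratio (X j) (\<theta> j) \<le> ratio (X i) (\<theta> i)"
    using rule bg s by (simp add: is_iprr_rule_def X_def g_def i_def)
  have rati: "ratio (X i) (\<theta> i) = ereal r" using thi by (simp add: ratio_def r_def)
  have I1: "\<theta> j \<ge> 0" for j using I s by (simp add: Inv_def)
  have I2: "\<pi> j = None \<Longrightarrow> \<theta> j = 0 \<or> \<theta> j < c j" for j using I s by (simp add: Inv_def)
  have I3: "\<forall>j\<ge>n. \<pi> j = None" using I s by (simp add: Inv_def)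
  have aj: "X j \<le> r * c j" if j: "j < n" for j
  proof (cases "\<pi> j = None")
    case False
    then have "X j = 0" unfolding X_def g_def by (rule infl_revealed)
    then show ?thesis using r0 cnn j by simp
  next
    case True
    have cj: "c j \<ge> 0" using cnn j by simp
    show ?thesis
    proof (cases "\<theta> j = 0")
      case True
      have "ratio (X j) (\<theta> j) \<le> ereal r" using rat j rati by simp
      then have "\<not> X j > 0" using True by (auto simp: ratio_def)
      then show ?thesis using r0 cj by (simp add: not_less) (meson mult_nonneg_nonneg order_trans)
    next
      case False
      then have tj: "\<theta> j > 0" using I1[of j] by simp
      have tc: "\<theta> j < c j" using I2[OF True] False by simp
      have "ratio (X j) (\<theta> j) \<le> ereal r" using rat j rati by simp
      moreover have "ratio (X j) (\<theta> j) = ereal (X j / \<theta> j)" using False by (simp add: ratio_def)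
      ultimately have "ereal (X j / \<theta> j) \<le> ereal r" by simp
      then have "X j / \<theta> j \<le> r" by simp
      then have "X j \<le> r * \<theta> j" using tj by (simp add: field_simps)
      also have "\<dots> \<le> r * c j" using tc r0 by (intro mult_left_mono) auto
      finally show ?thesis .
    qed
  qed
  have o: "bias n g * 2 ^ n \<le> (\<Sum>u\<in>cube n. ind (g u \<noteq> dt_eval T (rc \<pi> u)))
            + (\<Sum>u\<in>cube n. dt_cost X T (rc \<pi> u))"
    unfolding X_def by (rule osss[OF T(1) I3])
  have z: "(\<Sum>u\<in>cube n. ind (g u \<noteq> dt_eval T (rc \<pi> u))) = 0"
  proof (rule sum.neutral, rule ballI)
    fix u assume u: "u \<in> cube n"
    have "rc \<pi> u \<in> cube n" using rc_cube[OF I3 u] .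
    then have "dt_eval T (rc \<pi> u) = g u" using T(2) by (simp add: g_def restr_rc)
    then show "ind (g u \<noteq> dt_eval T (rc \<pi> u)) = 0" by (simp add: ind_def)
  qed
  have Wb: "dt_cost X T (rc \<pi> u) \<le> r * W" if u: "u \<in> cube n" for u
  proof -
    have w: "rc \<pi> u \<in> cube n" using rc_cube[OF I3 u] .
    have "dt_cost X T (rc \<pi> u) \<le> r * dt_cost c T (rc \<pi> u)"
      using aj T(1) by (intro dt_cost_scale) auto
    also have "dt_cost c T (rc \<pi> u) \<le> W"
      unfolding W_def dt_worst_cost_def using w by (intro Max_ge) auto
    then have "r * dt_cost c T (rc \<pi> u) \<le> r * W" using r0 by (rule mult_left_mono)
    finally show ?thesis .
  qed
  have "(\<Sum>u\<in>cube n. dt_cost X T (rc \<pi> u)) \<le> of_nat (card (cube n)) * (r * W)"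
    by (rule sum_bounded_above) (rule Wb)
  then have s1: "(\<Sum>u\<in>cube n. dt_cost X T (rc \<pi> u)) \<le> 2 ^ n * (r * W)" by (simp add: card_cube)
  have "bias n g * 2 ^ n \<le> 2 ^ n * (r * W)" using o z s1 by linarith
  then have "2 ^ n * bias n g \<le> 2 ^ n * (r * W)" by (simp add: mult.commute)
  then have "bias n g \<le> r * W" by simp
  then have "\<epsilon> < X i / \<theta> i * W" using bg by (simp add: r_def)
  then have "\<theta> i * \<epsilon> < X i * W" using thi by (simp add: field_simps)
  then show ?thesis using s by (simp add: X_def g_def i_def W_def)
qed

lemma err_halted:
  assumes "halted s"
  shows "(\<Sum>u\<in>cube n. ind (outp n f (snd s) \<noteq> f (rc (snd s) u))) \<le> \<epsilon> * 2 ^ n"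
proof -
  define g where "g = restr f (snd s)"
  define p where "p = prob n g"
  have e1: "(\<Sum>u\<in>cube n. ind (outp n f (snd s) \<noteq> f (rc (snd s) u))) = prob n (\<lambda>u. outp n f (snd s) \<noteq> g u) * 2 ^ n"
    by (simp add: prob_sum g_def restr_rc)
  have pf: "prob n (\<lambda>x. g x \<noteq> False) = p" by (simp add: p_def)
  have pt: "prob n (\<lambda>x. g x \<noteq> True) = 1 - p" using prob_not[of n g] by (simp add: p_def)
  have "prob n (\<lambda>u. outp n f (snd s) \<noteq> g u) \<le> bias n g"
  proof (cases "p \<ge> 1/2")
    case True
    then have "outp n f (snd s) = True" by (simp add: outp_def p_def g_def)
    then have "prob n (\<lambda>u. outp n f (snd s) \<noteq> g u) = 1 - p" using pt by (simp add: eq_commute)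
    then show ?thesis using True pf pt by (simp add: bias_def)
  next
    case False
    then have "outp n f (snd s) = False" by (simp add: outp_def p_def g_def)
    then have "prob n (\<lambda>u. outp n f (snd s) \<noteq> g u) = p" by (simp add: p_def)
    then show ?thesis using False pf pt by (simp add: bias_def)
  qed
  also have "\<dots> \<le> \<epsilon>" using assms by (simp add: halted_def g_def)
  finally show ?thesis unfolding e1 by simp
qed

lemma stepH_eq:
  assumes "\<not> halted s"
  shows "stepH x s = ((fst s)(sel s := fst s (sel s) + \<beta>),
    if c (sel s) \<le> fst s (sel s) + \<beta> then (snd s)(sel s \<mapsto> x (sel s)) else snd s)"
  using assms by (simp add: stepH_def step_eq)

lemma err:
  "\<forall>s. Inv s \<longrightarrow> (\<forall>u\<in>cube n. halted (Rs (rc (snd s) u) s k)) \<longrightarrow>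
     (\<Sum>u\<in>cube n. ind (outp n f (snd (Rs (rc (snd s) u) s k)) \<noteq> f (rc (snd s) u))) \<le> \<epsilon> * 2 ^ n"
proof (induction k)
  case 0
  show ?case
  proof (intro allI impI)
    fix s assume "Inv s" "\<forall>u\<in>cube n. halted (Rs (rc (snd s) u) s 0)"
    then have "halted s" using cube_ne by auto
    then show "(\<Sum>u\<in>cube n. ind (outp n f (snd (Rs (rc (snd s) u) s 0)) \<noteq> f (rc (snd s) u))) \<le> \<epsilon> * 2 ^ n"
      using err_halted by simp
  qed
next
  case (Suc k)
  show ?case
  proof (intro allI impI)
    fix s assume I: "Inv s" and Hh: "\<forall>u\<in>cube n. halted (Rs (rc (snd s) u) s (Suc k))"
    show "(\<Sum>u\<in>cube n. ind (outp n f (snd (Rs (rc (snd s) u) s (Suc k))) \<noteq> f (rc (snd s) u))) \<le> \<epsilon> * 2 ^ n"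
    proof (cases "halted s")
      case True
      then show ?thesis using err_halted by (simp add: Rs_halted)
    next
      case nh: False
      obtain \<theta> \<pi> where s: "s = (\<theta>, \<pi>)" by (cases s)
      have sn: "snd s = \<pi>" using s by simp
      define i where "i = sel s"
      define \<theta>' where "\<theta>' = \<theta>(i := \<theta> i + \<beta>)"
      have i: "i < n" "\<pi> i = None" using step_props[OF I nh] s by (auto simp: i_def)
      have stp: "stepH x s = (\<theta>', if c i \<le> \<theta> i + \<beta> then \<pi>(i \<mapsto> x i) else \<pi>)" for x
        using stepH_eq[OF nh, of x] s by (simp add: i_def \<theta>'_def)
      have Inv': "Inv (\<theta>', if c i \<le> \<theta> i + \<beta> then \<pi>(i \<mapsto> x i) else \<pi>)" for x
        using Inv_step[OF I nh, of x] stp[of x] nh by (simp add: stepH_def)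
      show ?thesis
      proof (cases "c i \<le> \<theta> i + \<beta>")
        case False
        have st: "stepH x s = (\<theta>', \<pi>)" for x using stp False by simp
        have I': "Inv (\<theta>', \<pi>)" using Inv'[of undefined] False by simp
        have H': "\<forall>u\<in>cube n. halted (Rs (rc (snd (\<theta>', \<pi>)) u) (\<theta>', \<pi>) k)"
          using Hh by (simp add: Rs_Suc st sn)
        show ?thesis using Suc.IH I' H' by (simp add: Rs_Suc st sn)
      next
        case True
        define sb where "sb b = (\<theta>', \<pi>(i \<mapsto> b))" for b
        have stb: "stepH (rc (\<pi>(i \<mapsto> b)) u) s = sb b" for b u
          using stp True by (simp add: sb_def rc_def)
        have Ib: "Inv (sb b)" for b using Inv'[of "\<lambda>_. b"] True by (simp add: sb_def)
        have Hb: "\<forall>u\<in>cube n. halted (Rs (rc (snd (sb b)) u) (sb b) k)" for b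
        proof
          fix u assume u: "u \<in> cube n"
          have "Rs (rc (snd (sb b)) u) (sb b) k = Rs (rc (\<pi>(i \<mapsto> b)) u) s (Suc k)"
            by (simp add: Rs_Suc stb sb_def)
          also have "\<dots> = Rs (rc \<pi> (u(i := b))) s (Suc k)" by (simp add: rc_upd_eq' i(2))
          finally show "halted (Rs (rc (snd (sb b)) u) (sb b) k)"
            using Hh upd_cube[OF i(1) u, of b] sn by simp
        qed
        have IHb: "(\<Sum>u\<in>cube n. ind (outp n f (snd (Rs (rc (\<pi>(i \<mapsto> b)) u) s (Suc k))) \<noteq> f (rc (\<pi>(i \<mapsto> b)) u)))
            \<le> \<epsilon> * 2 ^ n" for b
          using Suc.IH Ib[of b] Hb[of b] by (simp add: Rs_Suc stb sb_def)
        define H where "H x = ind (outp n f (snd (Rs x s (Suc k))) \<noteq> f x)" for x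
        have "(\<Sum>u\<in>cube n. H (rc \<pi> u)) = ((\<Sum>u\<in>cube n. H (rc (\<pi>(i \<mapsto> True)) u)) + (\<Sum>u\<in>cube n. H (rc (\<pi>(i \<mapsto> False)) u))) / 2"
          using i by (rule split_avg)
        also have "\<dots> \<le> (\<epsilon> * 2 ^ n + \<epsilon> * 2 ^ n) / 2"
          using IHb[of True] IHb[of False] unfolding H_def by (intro divide_right_mono add_mono) auto
        finally show ?thesis using sn by (simp add: H_def)
      qed
    qed
  qed
qed

end


context alg
begin

definition Pot :: "real \<Rightarrow> (nat \<Rightarrow> bool option) \<Rightarrow> (nat \<Rightarrow> real) \<Rightarrow> real" where
  "Pot W \<pi> m = (\<Sum>j<n. \<beta> + W / \<epsilon> * Vf (infl n (restr f \<pi>) j) (m j))"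

definition Jm :: "real \<Rightarrow> state \<Rightarrow> (nat \<Rightarrow> real) \<Rightarrow> bool" where
  "Jm W s m \<longleftrightarrow> Inv s \<and> (\<forall>j<n. infl n (restr f (snd s)) j \<le> m j \<and> m j \<le> 1
      \<and> fst s j \<le> \<beta> + W / \<epsilon> * m j)"

lemma cost_now:
  assumes W: "W \<ge> 0" and J: "Jm W s m"
  shows "(\<Sum>j<n. fst s j) \<le> Pot W (snd s) m"
  unfolding Pot_def
proof (rule sum_mono)
  fix j assume j: "j \<in> {..<n}"
  let ?X = "infl n (restr f (snd s)) j"
  have h: "?X \<le> m j" "m j \<le> 1" "fst s j \<le> \<beta> + W / \<epsilon> * m j" using J j by (auto simp: Jm_def)
  have x0: "?X \<ge> 0" by (rule infl_nonneg)
  have "m j \<le> Vf ?X (m j)" using h x0 by (intro Vf_ge) auto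
  moreover have "W / \<epsilon> \<ge> 0" using W eps by simp
  ultimately have "W / \<epsilon> * m j \<le> W / \<epsilon> * Vf ?X (m j)" by (rule mult_left_mono)
  then show "fst s j \<le> \<beta> + W / \<epsilon> * Vf ?X (m j)" using h by linarith
qed

lemma cost:
  assumes W: "W \<ge> 0"
    and KW: "\<And>s. Inv s \<Longrightarrow> \<not> halted s \<Longrightarrow> fst s (sel s) > 0 \<Longrightarrow>
          fst s (sel s) * \<epsilon> < infl n (restr f (snd s)) (sel s) * W"
  shows "\<forall>s m. Jm W s m \<longrightarrow>
     (\<Sum>u\<in>cube n. \<Sum>j<n. fst (Rs (rc (snd s) u) s k) j) \<le> 2 ^ n * Pot W (snd s) m"
proof (induction k)
  case 0
  show ?case
  proof (intro allI impI)
    fix s m assume J: "Jm W s m"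
    have "(\<Sum>u\<in>cube n. \<Sum>j<n. fst (Rs (rc (snd s) u) s 0) j) = 2 ^ n * (\<Sum>j<n. fst s j)"
      by (simp add: card_cube)
    also have "\<dots> \<le> 2 ^ n * Pot W (snd s) m" using cost_now[OF W J] by simp
    finally show "(\<Sum>u\<in>cube n. \<Sum>j<n. fst (Rs (rc (snd s) u) s 0) j) \<le> 2 ^ n * Pot W (snd s) m" .
  qed
next
  case (Suc k)
  show ?case
  proof (intro allI impI)
    fix s m assume J: "Jm W s m"
    have I: "Inv s" using J by (simp add: Jm_def)
    show "(\<Sum>u\<in>cube n. \<Sum>j<n. fst (Rs (rc (snd s) u) s (Suc k)) j) \<le> 2 ^ n * Pot W (snd s) m"
    proof (cases "halted s")
      case True
      have "(\<Sum>u\<in>cube n. \<Sum>j<n. fst (Rs (rc (snd s) u) s (Suc k)) j) = 2 ^ n * (\<Sum>j<n. fst s j)"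
        using True by (simp add: card_cube Rs_halted)
      also have "\<dots> \<le> 2 ^ n * Pot W (snd s) m" using cost_now[OF W J] by simp
      finally show ?thesis .
    next
      case nh: False
      obtain \<theta> \<pi> where s: "s = (\<theta>, \<pi>)" by (cases s)
      have sn: "snd s = \<pi>" and sf: "fst s = \<theta>" using s by simp_all
      define i where "i = sel s"
      define \<theta>' where "\<theta>' = \<theta>(i := \<theta> i + \<beta>)"
      have i: "i < n" "\<pi> i = None" using step_props[OF I nh] s by (auto simp: i_def)
      have stp: "stepH x s = (\<theta>', if c i \<le> \<theta> i + \<beta> then \<pi>(i \<mapsto> x i) else \<pi>)" for x
        using stepH_eq[OF nh, of x] s by (simp add: i_def \<theta>'_def)
      have Inv': "Inv (\<theta>', if c i \<le> \<theta> i + \<beta> then \<pi>(i \<mapsto> x i) else \<pi>)" for x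
        using Inv_step[OF I nh, of x] stp[of x] nh by (simp add: stepH_def)
      have Jj: "infl n (restr f \<pi>) j \<le> m j" "m j \<le> 1" "\<theta> j \<le> \<beta> + W / \<epsilon> * m j" if "j < n" for j
        using J that s by (auto simp: Jm_def)
      have We: "W / \<epsilon> \<ge> 0" using W eps by simp
      have mnn: "m j \<ge> 0" if "j < n" for j using Jj(1)[OF that] infl_nonneg[of n "restr f \<pi>" j] by linarith
      have thi: "\<theta> i \<le> W / \<epsilon> * m i"
      proof (cases "\<theta> i > 0")
        case True
        then have "\<theta> i * \<epsilon> < infl n (restr f \<pi>) i * W" using KW[OF I nh] s by (simp add: i_def)
        also have "\<dots> \<le> m i * W" using Jj(1)[OF i(1)] W by (rule mult_right_mono)
        finally have "\<theta> i * \<epsilon> < m i * W" .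
        then show ?thesis using eps by (simp add: field_simps)
      next
        case False
        then have "\<theta> i \<le> 0" by simp
        moreover have "W / \<epsilon> * m i \<ge> 0" using We mnn[OF i(1)] by (rule mult_nonneg_nonneg)
        ultimately show ?thesis by linarith
      qed
      have th': "\<theta>' j \<le> \<beta> + W / \<epsilon> * m j" if "j < n" for j
        using Jj(3)[OF that] thi by (simp add: \<theta>'_def)
      show ?thesis
      proof (cases "c i \<le> \<theta> i + \<beta>")
        case False
        have st: "stepH x s = (\<theta>', \<pi>)" for x using stp False by simp
        have J': "Jm W (\<theta>', \<pi>) m"
          using Inv'[of undefined] False Jj th' by (simp add: Jm_def)
        show ?thesis using Suc.IH J' by (simp add: Rs_Suc st sn)
      next
        case True
        define sb where "sb b = (\<theta>', \<pi>(i \<mapsto> b))" for b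
        define mb where "mb b j = max (m j) (infl n (restr f (\<pi>(i \<mapsto> b))) j)" for b j
        have stb: "stepH (rc (\<pi>(i \<mapsto> b)) u) s = sb b" for b u
          using stp True by (simp add: sb_def rc_def)
        have Ib: "Inv (sb b)" for b using Inv'[of "\<lambda>_. b"] True by (simp add: sb_def)
        have Jb: "Jm W (sb b) (mb b)" for b
        proof -
          have "infl n (restr f (\<pi>(i \<mapsto> b))) j \<le> mb b j \<and> mb b j \<le> 1 \<and> \<theta>' j \<le> \<beta> + W / \<epsilon> * mb b j"
            if j: "j < n" for j
          proof (intro conjI)
            show "infl n (restr f (\<pi>(i \<mapsto> b))) j \<le> mb b j" by (simp add: mb_def)
            show "mb b j \<le> 1" using Jj(2)[OF j] infl_le1 by (simp add: mb_def)
            have "W / \<epsilon> * m j \<le> W / \<epsilon> * mb b j" using We by (intro mult_left_mono) (auto simp: mb_def)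
            then show "\<theta>' j \<le> \<beta> + W / \<epsilon> * mb b j" using th'[OF j] by linarith
          qed
          then show ?thesis using Ib by (simp add: Jm_def sb_def)
        qed
        have IHb: "(\<Sum>u\<in>cube n. \<Sum>j<n. fst (Rs (rc (\<pi>(i \<mapsto> b)) u) s (Suc k)) j)
            \<le> 2 ^ n * Pot W (\<pi>(i \<mapsto> b)) (mb b)" for b
          using Suc.IH Jb[of b] by (simp add: Rs_Suc stb sb_def)
        have PS: "Pot W (\<pi>(i \<mapsto> True)) (mb True) + Pot W (\<pi>(i \<mapsto> False)) (mb False) \<le> 2 * Pot W \<pi> m"
        proof -
          have "Pot W (\<pi>(i \<mapsto> True)) (mb True) + Pot W (\<pi>(i \<mapsto> False)) (mb False)
             = (\<Sum>j<n. 2 * \<beta> + W / \<epsilon> * (Vf (infl n (restr f (\<pi>(i \<mapsto> True))) j) (mb True j)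
                   + Vf (infl n (restr f (\<pi>(i \<mapsto> False))) j) (mb False j)))"
            by (simp add: Pot_def sum.distrib[symmetric] algebra_simps)
          also have "\<dots> \<le> (\<Sum>j<n. 2 * (\<beta> + W / \<epsilon> * Vf (infl n (restr f \<pi>) j) (m j)))"
          proof (rule sum_mono)
            fix j assume j: "j \<in> {..<n}"
            have "Vf (infl n (restr f (\<pi>(i \<mapsto> True))) j) (mb True j)
                   + Vf (infl n (restr f (\<pi>(i \<mapsto> False))) j) (mb False j)
                  \<le> 2 * Vf (infl n (restr f \<pi>) j) (m j)"
              unfolding mb_def
              using j Jj(1,2) infl_super[where \<pi>=\<pi> and i=i and n=n, OF i, of f j] infl_nonneg
              by (intro Vf_super) auto
            then have "W / \<epsilon> * (Vf (infl n (restr f (\<pi>(i \<mapsto> True))) j) (mb True j)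
                   + Vf (infl n (restr f (\<pi>(i \<mapsto> False))) j) (mb False j))
                  \<le> W / \<epsilon> * (2 * Vf (infl n (restr f \<pi>) j) (m j))"
              using We by (rule mult_left_mono)
            then show "2 * \<beta> + W / \<epsilon> * (Vf (infl n (restr f (\<pi>(i \<mapsto> True))) j) (mb True j)
                   + Vf (infl n (restr f (\<pi>(i \<mapsto> False))) j) (mb False j))
                 \<le> 2 * (\<beta> + W / \<epsilon> * Vf (infl n (restr f \<pi>) j) (m j))" by (simp add: algebra_simps)
          qed
          also have "\<dots> = 2 * Pot W \<pi> m" by (simp add: Pot_def sum_distrib_left)
          finally show ?thesis .
        qed
        define H where "H x = (\<Sum>j<n. fst (Rs x s (Suc k)) j)" for x
        have "(\<Sum>u\<in>cube n. H (rc \<pi> u)) = ((\<Sum>u\<in>cube n. H (rc (\<pi>(i \<mapsto> True)) u)) + (\<Sum>u\<in>cube n. H (rc (\<pi>(i \<mapsto> False)) u))) / 2"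
          using i by (rule split_avg)
        also have "\<dots> \<le> (2 ^ n * Pot W (\<pi>(i \<mapsto> True)) (mb True) + 2 ^ n * Pot W (\<pi>(i \<mapsto> False)) (mb False)) / 2"
          using IHb[of True] IHb[of False] unfolding H_def by (intro divide_right_mono add_mono) auto
        also have "\<dots> = 2 ^ n * (Pot W (\<pi>(i \<mapsto> True)) (mb True) + Pot W (\<pi>(i \<mapsto> False)) (mb False)) / 2"
          by (simp add: algebra_simps)
        also have "\<dots> \<le> 2 ^ n * (2 * Pot W \<pi> m) / 2"
          using PS by (intro divide_right_mono mult_left_mono) auto
        also have "\<dots> = 2 ^ n * Pot W \<pi> m" by simp
        finally show ?thesis using sn by (simp add: H_def)
      qed
    qed
  qed
qed

end


context alg
begin

lemma Rs_add: "Rs x s (a + b) = Rs x (Rs x s a) b"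
  unfolding Rs_def by (metis add.commute comp_apply funpow_add)

lemma Rs_Suc2: "Rs x s (Suc k) = stepH x (Rs x s k)"
  by (simp add: Rs_def)

lemma run_eq:
  "(\<forall>k'<k. \<not> halted (iprr_run c \<beta> sel x k')) \<Longrightarrow> iprr_run c \<beta> sel x k = Rs x (\<lambda>_. 0, Map.empty) k"
proof (induction k)
  case 0 then show ?case by (simp add: iprr_run_def)
next
  case (Suc k)
  then have e: "iprr_run c \<beta> sel x k = Rs x (\<lambda>_. 0, Map.empty) k" by simp
  have nh: "\<not> halted (iprr_run c \<beta> sel x k)" using Suc.prems by simp
  have "iprr_run c \<beta> sel x (Suc k) = iprr_step c \<beta> sel x (iprr_run c \<beta> sel x k)"
    by (simp add: iprr_run_def)
  also have "\<dots> = stepH x (iprr_run c \<beta> sel x k)" using nh by (simp add: stepH_def)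
  finally show ?case by (simp add: e Rs_Suc2)
qed

lemma final_eq:
  "(\<exists>k. iprr_halts_at n f c \<epsilon> \<beta> sel x k) \<and>
   iprr_final n f c \<epsilon> \<beta> sel x = Rs x (\<lambda>_. 0, Map.empty) K0"
proof -
  let ?s0 = "(\<lambda>_. 0, Map.empty) :: state"
  have hiff: "iprr_halts_at n f c \<epsilon> \<beta> sel x k \<longleftrightarrow> halted (iprr_run c \<beta> sel x k)" for k
    by (simp add: iprr_halts_at_def halted_def)
  have ex: "\<exists>k\<le>K0. iprr_halts_at n f c \<epsilon> \<beta> sel x k"
  proof (cases "\<forall>k'<K0. \<not> halted (iprr_run c \<beta> sel x k')")
    case True
    then have "iprr_run c \<beta> sel x K0 = Rs x ?s0 K0" by (rule run_eq)
    then have "halted (iprr_run c \<beta> sel x K0)" using terminates by simp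
    then show ?thesis using hiff by blast
  next
    case False
    then show ?thesis using hiff by (auto intro: less_imp_le)
  qed
  define \<tau> where "\<tau> = iprr_time n f c \<epsilon> \<beta> sel x"
  have \<tau>: "\<tau> = (LEAST k. iprr_halts_at n f c \<epsilon> \<beta> sel x k)" by (simp add: \<tau>_def iprr_time_def)
  have tle: "\<tau> \<le> K0" using ex unfolding \<tau> by (meson Least_le order_trans)
  have th: "iprr_halts_at n f c \<epsilon> \<beta> sel x \<tau>" using ex unfolding \<tau> by (meson LeastI)
  have before: "\<forall>k'<\<tau>. \<not> halted (iprr_run c \<beta> sel x k')"
    using hiff not_less_Least unfolding \<tau> by blast
  have fe: "iprr_final n f c \<epsilon> \<beta> sel x = Rs x ?s0 \<tau>"
    using run_eq[OF before] by (simp add: iprr_final_def \<tau>_def)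
  have hh: "halted (Rs x ?s0 \<tau>)" using th hiff run_eq[OF before] by simp
  have "Rs x ?s0 K0 = Rs x (Rs x ?s0 \<tau>) (K0 - \<tau>)" using tle Rs_add[of x ?s0 \<tau> "K0 - \<tau>"] by simp
  also have "\<dots> = Rs x ?s0 \<tau>" using hh by (rule Rs_halted)
  finally show ?thesis using fe ex by auto
qed

end

fun mk :: "((nat \<Rightarrow> bool) \<Rightarrow> bool) \<Rightarrow> nat \<Rightarrow> (nat \<Rightarrow> bool) \<Rightarrow> dtree" where
  "mk f 0 a = Leaf (f a)"
| "mk f (Suc k) a = Query k (mk f k (a(k := False))) (mk f k (a(k := True)))"

definition mix :: "nat \<Rightarrow> (nat \<Rightarrow> bool) \<Rightarrow> (nat \<Rightarrow> bool) \<Rightarrow> (nat \<Rightarrow> bool)" where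
  "mix k x a = (\<lambda>i. if i < k then x i else a i)"

lemma mix_step: "x k = b \<Longrightarrow> mix k x (a(k := b)) = mix (Suc k) x a"
  by (auto simp: mix_def fun_eq_iff less_Suc_eq)

lemma mk_eval: "dt_eval (mk f k a) x = f (mix k x a)"
proof (induction k arbitrary: a)
  case 0 then show ?case by (simp add: mix_def)
next
  case (Suc k)
  show ?case
  proof (cases "x k")
    case True
    have "dt_eval (mk f (Suc k) a) x = dt_eval (mk f k (a(k := True))) x" using True by simp
    also have "\<dots> = f (mix k x (a(k := True)))" by (rule Suc.IH)
    also have "mix k x (a(k := True)) = mix (Suc k) x a" using True by (intro mix_step) simp
    finally show ?thesis .
  next
    case False
    have "dt_eval (mk f (Suc k) a) x = dt_eval (mk f k (a(k := False))) x" using False by simp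
    also have "\<dots> = f (mix k x (a(k := False)))" by (rule Suc.IH)
    also have "mix k x (a(k := False)) = mix (Suc k) x a" using False by (intro mix_step) simp
    finally show ?thesis .
  qed
qed

lemma mk_vars: "dt_vars (mk f k a) \<subseteq> {..<k}"
proof (induction k arbitrary: a)
  case 0 then show ?case by simp
next
  case (Suc k)
  then show ?case using Suc.IH[of "a(k := False)"] Suc.IH[of "a(k := True)"]
    by (fastforce simp: subset_iff less_Suc_eq)
qed

lemma restr_empty: "restr f Map.empty = f"
  by (simp add: restr_def)

theorem mainTheorem2:
  fixes n :: nat and f :: "(nat \<Rightarrow> bool) \<Rightarrow> bool" and c :: "nat \<Rightarrow> real"
    and \<epsilon> \<beta> :: real and sel :: "state \<Rightarrow> nat"
  assumes "\<forall>i<n. c i \<ge> 0"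
    and "0 < \<epsilon>" and "\<epsilon> \<le> 1/2" and "\<beta> > 0"
    and "is_iprr_rule n f \<epsilon> sel"
  shows "(\<forall>x\<in>cube n. \<exists>k. iprr_halts_at n f c \<epsilon> \<beta> sel x k)
    \<and> prob n (\<lambda>x. iprr_output n f c \<epsilon> \<beta> sel x \<noteq> f x) \<le> \<epsilon>
    \<and> iprr_avg_cost n f c \<epsilon> \<beta> sel
        \<le> \<beta> * real n + opt_w0 n f c / \<epsilon> *
           (\<Sum>i<n. if infl n f i = 0 then 0 else infl n f i * (1 + ln (1 / infl n f i)))"
proof -
  interpret A: alg n f c \<epsilon> \<beta> sel using assms by unfold_locales auto
  let ?s0 = "(\<lambda>_. 0, Map.empty) :: state"
  define Fin where "Fin x = A.Rs x ?s0 A.K0" for x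
  have fin: "iprr_final n f c \<epsilon> \<beta> sel x = Fin x" for x
    using A.final_eq[of x] by (simp add: Fin_def)
  have P1: "\<forall>x\<in>cube n. \<exists>k. iprr_halts_at n f c \<epsilon> \<beta> sel x k"
    using A.final_eq by blast
  have P2: "prob n (\<lambda>x. iprr_output n f c \<epsilon> \<beta> sel x \<noteq> f x) \<le> \<epsilon>"
  proof -
    have Hh: "\<forall>u\<in>cube n. A.halted (A.Rs (rc (snd ?s0) u) ?s0 A.K0)"
      using A.terminates by simp
    have "(\<Sum>u\<in>cube n. ind (outp n f (snd (A.Rs (rc (snd ?s0) u) ?s0 A.K0)) \<noteq> f (rc (snd ?s0) u))) \<le> \<epsilon> * 2 ^ n"
      using A.err A.Inv_s0 Hh by blast
    then have "(\<Sum>u\<in>cube n. ind (iprr_output n f c \<epsilon> \<beta> sel u \<noteq> f u)) \<le> \<epsilon> * 2 ^ n"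
      by (simp add: iprr_output_def fin Fin_def outp_def)
    then have "prob n (\<lambda>x. iprr_output n f c \<epsilon> \<beta> sel x \<noteq> f x) * 2 ^ n \<le> \<epsilon> * 2 ^ n"
      by (simp add: prob_sum)
    then show ?thesis by simp
  qed
  define S where "S = (\<Sum>i<n. if infl n f i = 0 then 0 else infl n f i * (1 + ln (1 / infl n f i)))"
  have S0: "S \<ge> 0"
    unfolding S_def
  proof (rule sum_nonneg)
    fix i assume "i \<in> {..<n}"
    have a: "infl n f i \<ge> 0" "infl n f i \<le> 1" by (rule infl_nonneg, rule infl_le1)
    show "0 \<le> (if infl n f i = 0 then 0 else infl n f i * (1 + ln (1 / infl n f i)))"
    proof (cases "infl n f i = 0")
      case False
      then have "infl n f i > 0" using a by simp
      then have "ln (1 / infl n f i) \<ge> 0" using a by simp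
      then show ?thesis using a by simp
    qed simp
  qed
  define Set where "Set = {dt_worst_cost n c t | t. dt_vars t \<subseteq> {..<n} \<and> (\<forall>x\<in>cube n. dt_eval t x = f x)}"
  have bound: "iprr_avg_cost n f c \<epsilon> \<beta> sel \<le> \<beta> * real n + w / \<epsilon> * S" if w: "w \<in> Set" for w
  proof -
    obtain T where T: "w = dt_worst_cost n c T" "dt_vars T \<subseteq> {..<n}" "\<forall>x\<in>cube n. dt_eval T x = f x"
      using w by (auto simp: Set_def)
    have W0: "w \<ge> 0"
    proof -
      obtain x0 where x0: "x0 \<in> cube n" using cube_ne by blast
      have nn: "dt_cost c T x \<ge> 0" for x using T(2) assms(1)
        by (induction T) (auto split: if_splits)
      have "dt_cost c T x0 \<le> w" unfolding T(1) dt_worst_cost_def using x0 by (intro Max_ge) auto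
      then show ?thesis using nn[of x0] by linarith
    qed
    have KW: "\<And>s. A.Inv s \<Longrightarrow> \<not> A.halted s \<Longrightarrow> fst s (sel s) > 0 \<Longrightarrow>
          fst s (sel s) * \<epsilon> < infl n (restr f (snd s)) (sel s) * w"
      using A.key[OF _ _ _ T(2,3)] T(1) by blast
    define m where "m j = infl n f j" for j
    have J: "A.Jm w ?s0 m"
    proof -
      have "0 \<le> w / \<epsilon> * m j" for j using W0 assms(2) infl_nonneg[of n f j]
        by (simp add: m_def)
      then show ?thesis using A.Inv_s0 assms(4) infl_le1[of n f]
        by (auto simp: A.Jm_def restr_empty m_def intro: add_nonneg_nonneg less_imp_le)
    qed
    have "(\<Sum>u\<in>cube n. \<Sum>j<n. fst (A.Rs (rc (snd ?s0) u) ?s0 A.K0) j) \<le> 2 ^ n * A.Pot w (snd ?s0) m"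
      using A.cost[OF W0 KW] J by blast
    then have c1: "(\<Sum>u\<in>cube n. iprr_cost n f c \<epsilon> \<beta> sel u) \<le> 2 ^ n * A.Pot w Map.empty m"
      by (simp add: iprr_cost_def fin Fin_def)
    have vf: "Vf (infl n f j) (infl n f j) = (if infl n f j = 0 then 0 else infl n f j * (1 + ln (1 / infl n f j)))" for j
      by (simp add: Vf_def algebra_simps)
    have pot: "A.Pot w Map.empty m = \<beta> * real n + w / \<epsilon> * S"
      by (simp add: A.Pot_def restr_empty m_def vf S_def sum.distrib sum_distrib_left)
    show ?thesis using c1 unfolding iprr_avg_cost_def pot by (simp add: field_simps)
  qed
  have ne: "Set \<noteq> {}"
  proof -
    let ?t = "mk f n (\<lambda>_. undefined)"
    have "dt_eval ?t x = f x" if "x \<in> cube n" for x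
    proof -
      have "mix n x (\<lambda>_. undefined) = x"
        using that by (auto simp: mix_def cube_def PiE_iff extensional_def fun_eq_iff)
      then show ?thesis by (simp add: mk_eval)
    qed
    then have "dt_worst_cost n c ?t \<in> Set" using mk_vars[of f n] by (auto simp: Set_def)
    then show ?thesis by blast
  qed
  have P3: "iprr_avg_cost n f c \<epsilon> \<beta> sel \<le> \<beta> * real n + opt_w0 n f c / \<epsilon> * S"
  proof (cases "S = 0")
    case True
    obtain w where "w \<in> Set" using ne by blast
    then show ?thesis using bound True by force
  next
    case False
    then have Sp: "S > 0" using S0 by simp
    define L where "L = (iprr_avg_cost n f c \<epsilon> \<beta> sel - \<beta> * real n) * \<epsilon> / S"
    have "L \<le> w" if "w \<in> Set" for w
    proof -
      have "iprr_avg_cost n f c \<epsilon> \<beta> sel - \<beta> * real n \<le> w / \<epsilon> * S" using bound[OF that] by simp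
      then show ?thesis using Sp assms(2) by (simp add: L_def field_simps)
    qed
    then have "L \<le> Inf Set" using ne by (intro cInf_greatest) auto
    then have "L \<le> opt_w0 n f c" by (simp add: opt_w0_def Set_def)
    then have "L / \<epsilon> * S \<le> opt_w0 n f c / \<epsilon> * S" using Sp assms(2)
      by (intro mult_right_mono divide_right_mono) auto
    moreover have "L / \<epsilon> * S = iprr_avg_cost n f c \<epsilon> \<beta> sel - \<beta> * real n"
      using Sp assms(2) by (simp add: L_def field_simps)
    ultimately show ?thesis by linarith
  qed
  show ?thesis using P1 P2 P3 by (simp add: S_def)
qed

end
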